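(* Let $X$ be a set, let $\mathcal{L}$ be a nest on $X$, and let $Y\subseteq X$. Then $X={\downarrow}Y$ if and only if there exists a cover of $X$ by elements of $\mathcal{L}$ such that no single member of this cover contains $Y$.
   Context: A nest on $X$ is a family of subsets of $X$ totally ordered by inclusion. Define $x\triangleleft_{\mathcal{L}} y$ iff there exists $L\in\mathcal{L}$ with $x\in L$ and $y\notin L$. For $Y\subseteq X$, ${\downarrow}Y=\{x\in X : \exists y\in Y,\ x\triangleleft_{\mathcal{L}} y\}$. A cover of $X$ by elements of $\mathcal{L}$ is a subfamily of $\mathcal{L}$ whose union is $X$. *)

theory Defs
  imports Main
begin

definition nest :: "'a set \<Rightarrow> 'a set set \<Rightarrow> bool" where
  "nest X \<L> \<longleftrightarrow> (\<forall>L\<in>\<L>. L \<subseteq> X) \<and> (\<forall>A\<in>\<L>. \<forall>B\<in>\<L>. A \<subseteq> B \<or> B \<subseteq> A)"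

definition nest_rel :: "'a set set \<Rightarrow> 'a \<Rightarrow> 'a \<Rightarrow> bool" where
  "nest_rel \<L> x y \<longleftrightarrow> (\<exists>L\<in>\<L>. x \<in> L \<and> y \<notin> L)"

definition down_set :: "'a set \<Rightarrow> 'a set set \<Rightarrow> 'a set \<Rightarrow> 'a set" where
  "down_set X \<L> Y = {x \<in> X. \<exists>y\<in>Y. nest_rel \<L> x y}"

definition is_cover_by :: "'a set \<Rightarrow> 'a set set \<Rightarrow> 'a set set \<Rightarrow> bool" where
  "is_cover_by X \<L> \<C> \<longleftrightarrow> \<C> \<subseteq> \<L> \<and> \<Union>\<C> = X"

end

theory Submission
  imports Defs
begin

theorem theorem4p1:
  fixes X Y :: "'a set" and \<L> :: "'a set set"
  assumes "nest X \<L>" and "Y \<subseteq> X"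
  shows "X = down_set X \<L> Y \<longleftrightarrow>
         (\<exists>\<C>. is_cover_by X \<L> \<C> \<and> (\<forall>C\<in>\<C>. \<not> Y \<subseteq> C))"
proof
  assume h: "X = down_set X \<L> Y"
  have sub: "\<forall>L\<in>\<L>. L \<subseteq> X" using assms(1) unfolding nest_def by blast
  let ?C = "{L \<in> \<L>. \<not> Y \<subseteq> L}"
  have "\<Union>?C = X"
  proof
    show "\<Union>?C \<subseteq> X" using sub by blast
    show "X \<subseteq> \<Union>?C"
    proof
      fix x assume "x \<in> X"
      then have "x \<in> down_set X \<L> Y" using h by simp
      then show "x \<in> \<Union>?C" unfolding down_set_def nest_rel_def by blast
    qed
  qed
  then show "\<exists>\<C>. is_cover_by X \<L> \<C> \<and> (\<forall>C\<in>\<C>. \<not> Y \<subseteq> C)"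
    unfolding is_cover_by_def by (intro exI[of _ ?C]) blast
next
  assume "\<exists>\<C>. is_cover_by X \<L> \<C> \<and> (\<forall>C\<in>\<C>. \<not> Y \<subseteq> C)"
  then obtain \<C> where c: "\<C> \<subseteq> \<L>" "\<Union>\<C> = X" "\<forall>C\<in>\<C>. \<not> Y \<subseteq> C"
    unfolding is_cover_by_def by blast
  show "X = down_set X \<L> Y"
  proof
    show "down_set X \<L> Y \<subseteq> X" unfolding down_set_def by blast
    show "X \<subseteq> down_set X \<L> Y"
    proof
      fix x assume x: "x \<in> X"
      then obtain C where "C \<in> \<C>" "x \<in> C" using c(2) by blast
      then show "x \<in> down_set X \<L> Y" using c x unfolding down_set_def nest_rel_def by blast
    qed
  qed
qed

end
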